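(* Let $\mathcal S=(\mathcal P,\mathcal L)$ be a linear space with $v$ points and constant line size $k$, $2<k<v$, and $b$ lines; let $G\le\mathrm{Aut}(\mathcal S)$ be transitive on lines, and let $\mathfrak C$ be a non-trivial $G$-invariant partition of $\mathcal P$ with $d$ classes of size $c$. If the permutation group $G^{\mathfrak C}$ induced by $G$ on $\mathfrak C$ contains the alternating group $\mathrm{Alt}_d$ on $\mathfrak C$, then $\mathrm{lcm}_{i=1}^{k}\binom{d}{d_i}$ divides $b$.
   Context: A linear space: a finite set $\mathcal P$ of points and a set $\mathcal L$ of subsets (lines) such that any two distinct points lie on exactly one line and each line has at least two points. For a line $\lambda$ and $0\le i\le k$, $d_i$ is the number of classes $C\in\mathfrak C$ with $|C\cap\lambda|=i$ (independent of $\lambda$ by line-transitivity). *)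

theory Defs
  imports "HOL-Combinatorics.Permutations" "HOL-Library.Disjoint_Sets"
begin

definition linear_space :: "'a set \<Rightarrow> 'a set set \<Rightarrow> bool" where
  "linear_space P L \<longleftrightarrow> finite P \<and> (\<forall>l\<in>L. l \<subseteq> P \<and> card l \<ge> 2) \<and>
     (\<forall>x\<in>P. \<forall>y\<in>P. x \<noteq> y \<longrightarrow> (\<exists>!l. l \<in> L \<and> x \<in> l \<and> y \<in> l))"

definition automorphism :: "'a set \<Rightarrow> 'a set set \<Rightarrow> ('a \<Rightarrow> 'a) \<Rightarrow> bool" where
  "automorphism P L g \<longleftrightarrow> g permutes P \<and> (\<forall>l\<in>L. g ` l \<in> L) \<and> (\<forall>l\<in>L. inv g ` l \<in> L)"

definition aut_subgroup :: "'a set \<Rightarrow> 'a set set \<Rightarrow> ('a \<Rightarrow> 'a) set \<Rightarrow> bool" where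
  "aut_subgroup P L G \<longleftrightarrow> (\<forall>g\<in>G. automorphism P L g) \<and> id \<in> G \<and>
     (\<forall>g\<in>G. \<forall>h\<in>G. g \<circ> h \<in> G) \<and> (\<forall>g\<in>G. inv g \<in> G)"

definition line_transitive :: "'a set set \<Rightarrow> ('a \<Rightarrow> 'a) set \<Rightarrow> bool" where
  "line_transitive L G \<longleftrightarrow> (\<forall>l1\<in>L. \<forall>l2\<in>L. \<exists>g\<in>G. g ` l1 = l2)"

definition G_invariant_partition :: "'a set \<Rightarrow> ('a \<Rightarrow> 'a) set \<Rightarrow> 'a set set \<Rightarrow> bool" where
  "G_invariant_partition P G C \<longleftrightarrow> partition_on P C \<and> (\<forall>g\<in>G. \<forall>X\<in>C. g ` X \<in> C)"

definition induced_contains_Alt :: "('a \<Rightarrow> 'a) set \<Rightarrow> 'a set set \<Rightarrow> bool" where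
  "induced_contains_Alt G C \<longleftrightarrow>
     (\<forall>\<sigma>. \<sigma> permutes C \<and> evenperm \<sigma> \<longrightarrow> (\<exists>g\<in>G. \<forall>X\<in>C. g ` X = \<sigma> X))"

definition dcount :: "'a set set \<Rightarrow> 'a set \<Rightarrow> nat \<Rightarrow> nat" where
  "dcount C l i = card {X \<in> C. card (X \<inter> l) = i}"

end

theory Submission
  imports Defs
begin

lemma even_trans:
  assumes fin: "finite C" and c3: "3 \<le> card C" and S: "S \<subseteq> C" and T: "T \<subseteq> C"
    and eq: "card S = card T"
  shows "\<exists>\<sigma>. \<sigma> permutes C \<and> evenperm \<sigma> \<and> \<sigma> ` S = T"
proof -
  have fS: "finite S" "finite T" using fin S T finite_subset by auto
  obtain f where f: "bij_betw f S T" using finite_same_card_bij[OF fS eq] by blast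
  have "card (C - S) = card (C - T)" using fin S T eq fS by (simp add: card_Diff_subset)
  then obtain h where h: "bij_betw h (C - S) (C - T)"
    using finite_same_card_bij fin by blast
  define s0 where "s0 x = (if x \<in> S then f x else if x \<in> C then h x else x)" for x
  have b1: "bij_betw s0 S T" using f by (rule bij_betw_cong[THEN iffD1, rotated]) (simp add: s0_def)
  have b2: "bij_betw s0 (C - S) (C - T)" using h by (rule bij_betw_cong[THEN iffD1, rotated]) (simp add: s0_def)
  have "bij_betw s0 (S \<union> (C - S)) (T \<union> (C - T))" by (rule bij_betw_combine[OF b1 b2]) auto
  moreover have "S \<union> (C - S) = C" "T \<union> (C - T) = C" using S T by auto
  ultimately have bC: "bij_betw s0 C C" by simp
  have p0: "s0 permutes C" by (rule bij_imp_permutes[OF bC]) (use S in \<open>auto simp: s0_def\<close>)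
  have im0: "s0 ` S = T" using b1 by (simp add: bij_betw_def)
  show ?thesis
  proof (cases "evenperm s0")
    case True then show ?thesis using p0 im0 by blast
  next
    case False
    have "2 \<le> card S \<or> 2 \<le> card (C - S)" using c3 fin S using card_mono[OF fin S] by (simp add: card_Diff_subset fS) linarith
    then obtain a b where ab: "a \<noteq> b" "(a \<in> S \<and> b \<in> S) \<or> (a \<in> C - S \<and> b \<in> C - S)"
    proof
      assume "2 \<le> card S"
      then obtain a b where "a \<in> S" "b \<in> S" "a \<noteq> b"
        by (metis card_le_Suc0_iff_eq fS(1) not_less_eq_eq numeral_2_eq_2)
      then show ?thesis using that by blast
    next
      assume "2 \<le> card (C - S)"
      then obtain a b where "a \<in> C - S" "b \<in> C - S" "a \<noteq> b"
        by (metis card_le_Suc0_iff_eq fin finite_Diff not_less_eq_eq numeral_2_eq_2)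
      then show ?thesis using that by blast
    qed
    have tp: "transpose a b permutes C" using ab S by (intro permutes_swap_id) auto
    have tS: "transpose a b ` S = S"
    proof -
      have "transpose a b x \<in> S \<longleftrightarrow> x \<in> S" for x using ab
        by (auto simp: transpose_def)
      then show ?thesis by (auto simp: image_iff) (metis transpose_involutory)
    qed
    let ?s = "s0 \<circ> transpose a b"
    have "?s permutes C" using p0 tp by (rule permutes_compose[rotated])
    moreover have "evenperm ?s"
      using False ab by (subst evenperm_comp) (auto intro: permutes_imp_permutation[OF fin p0] simp: evenperm_swap permutation_swap_id)
    moreover have "?s ` S = T" using tS im0 by (metis image_comp)
    ultimately show ?thesis by blast
  qed
qed

lemma aut_facts:
  assumes "aut_subgroup P L G" "g \<in> G"
  shows "bij g" "inv g \<in> G" "\<forall>l\<in>L. g ` l \<in> L" "g permutes P"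
  using assms unfolding aut_subgroup_def automorphism_def
  by (auto intro: permutes_bij)

lemma card_img_Int:
  assumes "bij g"
  shows "card (g ` X \<inter> g ` l) = card (X \<inter> l)"
proof -
  have "inj g" using assms bij_is_inj by blast
  then have "g ` X \<inter> g ` l = g ` (X \<inter> l)" by (simp add: image_Int)
  then show ?thesis using \<open>inj g\<close> by (simp add: card_image inj_on_subset)
qed

lemma phi_equiv:
  assumes b: "bij g" and c1: "\<forall>X\<in>C. g ` X \<in> C" and c2: "\<forall>X\<in>C. inv g ` X \<in> C"
  shows "{X\<in>C. card (X \<inter> g ` l) = i} = (\<lambda>X. g ` X) ` {X\<in>C. card (X \<inter> l) = i}"
proof
  show "(\<lambda>X. g ` X) ` {X\<in>C. card (X \<inter> l) = i} \<subseteq> {X\<in>C. card (X \<inter> g ` l) = i}"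
    using c1 card_img_Int[OF b] by auto
next
  show "{X\<in>C. card (X \<inter> g ` l) = i} \<subseteq> (\<lambda>X. g ` X) ` {X\<in>C. card (X \<inter> l) = i}"
  proof
    fix Y assume Y: "Y \<in> {X\<in>C. card (X \<inter> g ` l) = i}"
    have e: "g ` (inv g ` Y) = Y" using b by (simp add: bij_is_surj image_f_inv_f)
    have "card (inv g ` Y \<inter> l) = i" using Y card_img_Int[OF b, of "inv g ` Y" l] e by simp
    then show "Y \<in> (\<lambda>X. g ` X) ` {X\<in>C. card (X \<inter> l) = i}"
      using Y c2 e by (auto intro!: image_eqI[where x="inv g ` Y"])
  qed
qed

lemma two_class:
  assumes ls: "linear_space P L" and lk: "\<forall>l\<in>L. card l = k"
    and pC: "partition_on P C" and CX: "C = {X1, X2}" and ne: "X1 \<noteq> X2"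
    and l: "l \<in> L" and c1: "card X1 = c" and c2: "card X2 = c" and c: "1 < c"
    and all: "\<forall>u\<in>L. card (X1 \<inter> u) = i"
  shows "card (X2 \<inter> l) = i"
proof -
  have finP: "finite P" using ls by (simp add: linear_space_def)
  have sub: "\<forall>u\<in>L. u \<subseteq> P" using ls by (simp add: linear_space_def)
  have uniq: "\<forall>x\<in>P. \<forall>y\<in>P. x \<noteq> y \<longrightarrow> (\<exists>!l. l \<in> L \<and> x \<in> l \<and> y \<in> l)"
    using ls by (simp add: linear_space_def)
  have PU: "P = X1 \<union> X2" using pC CX by (simp add: partition_on_def)
  have dis: "X1 \<inter> X2 = {}" using pC CX ne by (auto simp: partition_on_def disjoint_def)
  have finL: "finite L" using sub finP by (meson PowI finite_Pow_iff rev_finite_subset subsetI)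
  have fX: "finite X1" "finite X2" using PU finP by auto
  have X2k: "card (X2 \<inter> u) = k - i" if "u \<in> L" for u
  proof -
    have "u = (X1 \<inter> u) \<union> (X2 \<inter> u)" using sub that PU by auto
    then have "card u = card (X1 \<inter> u) + card (X2 \<inter> u)"
      using dis fX by (metis card_Un_disjoint finite_Int inf_assoc inf_bot_left inf_left_commute)
    then show ?thesis using lk all that by simp
  qed
  obtain x where x: "x \<in> X1" using c1 c by fastforce
  have xP: "x \<in> P" using x PU by auto
  define Lx where "Lx = {u\<in>L. x \<in> u}"
  have finLx: "finite Lx" using finL by (simp add: Lx_def)
  have disj: "y \<notin> \<mu>" if "u \<in> Lx" "\<mu> \<in> Lx" "u \<noteq> \<mu>" "y \<in> u" "y \<noteq> x" for u \<mu> y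
  proof
    assume "y \<in> \<mu>"
    have "y \<in> P" using that sub unfolding Lx_def by auto
    then show False using uniq xP that \<open>y \<in> \<mu>\<close> unfolding Lx_def by blast
  qed
  have cover: "\<exists>u\<in>Lx. y \<in> u" if "y \<in> P" "y \<noteq> x" for y
    using uniq xP that unfolding Lx_def by blast
  have e2: "X2 = (\<Union>u\<in>Lx. u \<inter> X2)" using cover PU x dis by blast
  have e1: "X1 - {x} = (\<Union>u\<in>Lx. u \<inter> X1 - {x})" using cover PU by blast
  have D2: "\<forall>u\<in>Lx. \<forall>w\<in>Lx. u \<noteq> w \<longrightarrow> (u \<inter> X2) \<inter> (w \<inter> X2) = {}"
  proof (intro ballI impI)
    fix u w assume uw: "u \<in> Lx" "w \<in> Lx" "u \<noteq> w"
    show "(u \<inter> X2) \<inter> (w \<inter> X2) = {}"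
    proof (rule ccontr)
      assume "(u \<inter> X2) \<inter> (w \<inter> X2) \<noteq> {}"
      then obtain y where y: "y \<in> u" "y \<in> w" "y \<in> X2" by blast
      have "y \<noteq> x" using x dis y(3) by blast
      then show False using disj[OF uw y(1)] y(2) by blast
    qed
  qed
  have D1: "\<forall>u\<in>Lx. \<forall>w\<in>Lx. u \<noteq> w \<longrightarrow> (u \<inter> X1 - {x}) \<inter> (w \<inter> X1 - {x}) = {}"
  proof (intro ballI impI)
    fix u w assume uw: "u \<in> Lx" "w \<in> Lx" "u \<noteq> w"
    show "(u \<inter> X1 - {x}) \<inter> (w \<inter> X1 - {x}) = {}"
    proof (rule ccontr)
      assume "(u \<inter> X1 - {x}) \<inter> (w \<inter> X1 - {x}) \<noteq> {}"
      then obtain y where y: "y \<in> u" "y \<in> w" "y \<noteq> x" by blast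
      then show False using disj[OF uw y(1)] y(2) by blast
    qed
  qed
  have "card X2 = card (\<Union>u\<in>Lx. u \<inter> X2)" using arg_cong[OF e2, of card] .
  also have "\<dots> = (\<Sum>u\<in>Lx. card (u \<inter> X2))"
    apply (rule card_UN_disjoint[OF finLx])
    using fX apply blast
    using D2 by blast
  also have "\<dots> = (\<Sum>u\<in>Lx. k - i)"
  proof (rule sum.cong)
    fix u assume "u \<in> Lx"
    then have "card (X2 \<inter> u) = k - i" using X2k by (simp add: Lx_def)
    then show "card (u \<inter> X2) = k - i" by (simp add: Int_commute)
  qed simp
  finally have A: "c = card Lx * (k - i)" using c2 by simp
  have "card (X1 - {x}) = card (\<Union>u\<in>Lx. u \<inter> X1 - {x})" using arg_cong[OF e1, of card] .
  also have "\<dots> = (\<Sum>u\<in>Lx. card (u \<inter> X1 - {x}))"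
    apply (rule card_UN_disjoint[OF finLx])
    using fX apply blast
    using D1 by blast
  also have "\<dots> = (\<Sum>u\<in>Lx. i - 1)"
  proof (rule sum.cong)
    fix u assume "u \<in> Lx"
    then have "x \<in> u \<inter> X1" "card (u \<inter> X1) = i" using x all by (auto simp: Lx_def Int_commute)
    then show "card (u \<inter> X1 - {x}) = i - 1" using fX by simp
  qed simp
  finally have B: "c - 1 = card Lx * (i - 1)" using c1 x fX by simp
  have "card Lx \<noteq> 0"
  proof
    assume "card Lx = 0" then have "c = 0" using A by simp
    then show False using c by simp
  qed
  then obtain u where "u \<in> Lx" by (metis card.empty ex_in_conv)
  then have xu: "x \<in> X1 \<inter> u" and cu: "card (X1 \<inter> u) = i" using x all by (auto simp: Lx_def)
  have "finite (X1 \<inter> u)" using fX by simp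
  then have "card (X1 \<inter> u) > 0" using xu card_gt_0_iff by blast
  then have i1: "1 \<le> i" using cu by simp
  have eq: "card Lx * (k - i) = card Lx * (i - 1) + 1" using A B c by simp
  then have "card Lx dvd 1" by (metis dvd_add_right_iff dvd_triv_left)
  then have "card Lx = 1" by simp
  then have "k - i = i" using eq i1 by simp
  then show ?thesis using X2k l by simp
qed

theorem lemma4p8:
  fixes P :: "'a set" and L :: "'a set set" and G :: "('a \<Rightarrow> 'a) set"
    and C :: "'a set set" and k d c :: nat
  assumes "linear_space P L"
    and "\<forall>l\<in>L. card l = k"
    and "2 < k" and "k < card P"
    and "aut_subgroup P L G"
    and "line_transitive L G"
    and "G_invariant_partition P G C"
    and "card C = d" and "\<forall>X\<in>C. card X = c"
    and "1 < c" and "c < card P"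
    and "induced_contains_Alt G C"
  shows "\<forall>l\<in>L. Lcm ((\<lambda>i. d choose dcount C l i) ` {1..k}) dvd card L"
proof (intro ballI)
  fix l assume l: "l \<in> L"
  note ls = assms(1) and lk = assms(2) and aut = assms(5) and lt = assms(6) and inv = assms(7)
    and cd = assms(8) and cc = assms(9) and alt = assms(12)
  have finP: "finite P" using ls by (simp add: linear_space_def)
  have sub: "\<forall>u\<in>L. u \<subseteq> P" using ls by (simp add: linear_space_def)
  have pC: "partition_on P C" using inv by (simp add: G_invariant_partition_def)
  have GC: "\<forall>g\<in>G. \<forall>X\<in>C. g ` X \<in> C" using inv by (simp add: G_invariant_partition_def)
  have finL: "finite L" using sub finP by (meson PowI finite_Pow_iff rev_finite_subset subsetI)
  have finC: "finite C" using pC finP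
    by (metis finite_UnionD partition_on_def)
  have Gb: "bij g" "inv g \<in> G" "\<forall>u\<in>L. g ` u \<in> L" if "g \<in> G" for g
    using aut_facts[OF aut that] by auto
  have injH: "inj_on (\<lambda>X. g ` X) A" if "g \<in> G" for g A
    using Gb(1)[OF that] unfolding inj_on_def by (metis bij_is_inj inj_image_eq_iff)
  show "Lcm ((\<lambda>i. d choose dcount C l i) ` {1..k}) dvd card L"
  proof (rule Lcm_least)
    fix b assume "b \<in> (\<lambda>i. d choose dcount C l i) ` {1..k}"
    then obtain i where b: "b = d choose dcount C l i" by auto
    define phi where "phi u = {X\<in>C. card (X \<inter> u) = i}" for u
    define m where "m = card (phi l)"
    have dm: "dcount C l i = m" by (simp add: dcount_def phi_def m_def)
    have key: "phi (g ` u) = (\<lambda>X. g ` X) ` phi u" if "g \<in> G" for g u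
      unfolding phi_def using Gb[OF that] GC that by (intro phi_equiv) auto
    have trans: "\<exists>g\<in>G. g ` l = u" if "u \<in> L" for u
      using lt l that by (simp add: line_transitive_def)
    define M where "M = {S. S \<subseteq> C \<and> card S = m}"
    have cM: "card M = d choose m" unfolding M_def using n_subsets[OF finC] cd by simp
    have phiM: "phi u \<in> M" if uL: "u \<in> L" for u
    proof -
      obtain g where g: "g \<in> G" "g ` l = u" using trans[OF uL] by blast
      have "phi u = (\<lambda>X. g ` X) ` phi l" using key[OF g(1), of l] g(2) by simp
      moreover have "card ((\<lambda>X. g ` X) ` phi l) = m" using injH[OF g(1)] m_def by (simp add: card_image)
      moreover have "(\<lambda>X. g ` X) ` phi l \<subseteq> C" using GC g(1) by (auto simp: phi_def)
      ultimately show ?thesis by (simp add: M_def)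
    qed
    define F where "F S = {u\<in>L. phi u = S}" for S
    have le: "card (F A) \<le> card (F B)" if "g \<in> G" "(\<lambda>X. g ` X) ` A = B" for g A B
    proof (rule card_inj_on_le[where f="\<lambda>X. g ` X"])
      show "inj_on (\<lambda>X. g ` X) (F A)" using injH[OF that(1)] .
      show "(\<lambda>X. g ` X) ` F A \<subseteq> F B" using Gb[OF that(1)] key[OF that(1)] that(2)
        by (auto simp: F_def)
      show "finite (F B)" using finL by (simp add: F_def)
    qed
    show "b dvd card L"
    proof (cases "b = 1")
      case True then show ?thesis by simp
    next
      case bn1: False
      have reach: "\<forall>S\<in>M. \<exists>g\<in>G. (\<lambda>X. g ` X) ` phi l = S"
      proof -
        have phC: "phi l \<subseteq> C" by (auto simp: phi_def)
        have "C \<noteq> {}"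
        proof
          assume "C = {}"
          then have "P = {}" using pC by (simp add: partition_on_def)
          then show False using assms(4) by simp
        qed
        then have d0: "d \<noteq> 0" using cd finC by auto
        have d1: "d \<noteq> 1"
        proof
          assume "d = 1"
          then obtain X where "C = {X}" using cd card_1_singletonE by blast
          then have "P = X" using pC by (simp add: partition_on_def)
          then show False using cc assms(11) \<open>C = {X}\<close> by simp
        qed
        show ?thesis
        proof (cases "3 \<le> d")
          case True
          show ?thesis
          proof
            fix S assume "S \<in> M"
            then have S: "S \<subseteq> C" "card (phi l) = card S" by (auto simp: M_def m_def)
            obtain \<sigma> where \<sigma>: "\<sigma> permutes C" "evenperm \<sigma>" "\<sigma> ` phi l = S"
              using even_trans[OF finC _ phC S] True cd by auto
            then obtain g where g: "g \<in> G" "\<forall>X\<in>C. g ` X = \<sigma> X"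
              using alt by (auto simp: induced_contains_Alt_def)
            have "(\<lambda>X. g ` X) ` phi l = \<sigma> ` phi l"
              using g(2) phC by (intro image_cong) auto
            then show "\<exists>g\<in>G. (\<lambda>X. g ` X) ` phi l = S" using g(1) \<sigma>(3) by auto
          qed
        next
          case False
          then have d2: "d = 2" using d0 d1 by simp
          have "m \<le> 2" using card_mono[OF finC phC] cd d2 m_def by simp
          have b2: "b = 2 choose m" using b dm d2 by simp
          have "m \<noteq> 0"
          proof
            assume "m = 0" then have "b = 1" using b2 by simp
            then show False using bn1 by simp
          qed
          moreover have "m \<noteq> 2"
          proof
            assume "m = 2" then have "b = 1" using b2 by simp
            then show False using bn1 by simp
          qed
          ultimately have "m = 1" using \<open>m \<le> 2\<close> by linarith
          then have "card (phi l) = 1" using m_def by simp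
          then obtain X1 where X1: "phi l = {X1}" by (rule card_1_singletonE)
          have X1C: "X1 \<in> C" and X1i: "card (X1 \<inter> l) = i" using X1 by (auto simp: phi_def)
          have "card C = 2" using cd d2 by simp
          then obtain Y Z where YZ: "C = {Y, Z}" "Y \<noteq> Z" by (meson card_2_iff)
          obtain X2 where X2: "C = {X1, X2}" "X1 \<noteq> X2"
          proof (cases "X1 = Y")
            case True then show ?thesis using that[of Z] YZ by simp
          next
            case False then have "X1 = Z" using X1C YZ by simp
            then show ?thesis using that[of Y] YZ by (simp add: insert_commute)
          qed
          show ?thesis
          proof
            fix S assume "S \<in> M"
            then have S: "S \<subseteq> {X1, X2}" "card S = 1" using X2 \<open>m = 1\<close> by (auto simp: M_def)
            then have "S = {X1} \<or> S = {X2}" by (auto simp: card_Suc_eq)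
            then show "\<exists>g\<in>G. (\<lambda>X. g ` X) ` phi l = S"
            proof
              assume "S = {X1}"
              moreover have "id \<in> G" using aut by (simp add: aut_subgroup_def)
              ultimately show ?thesis using X1 by (intro bexI[of _ id]) auto
            next
              assume SX2: "S = {X2}"
              show ?thesis
              proof (rule ccontr)
                assume "\<not> ?thesis"
                then have nx: "\<forall>g\<in>G. g ` X1 \<noteq> X2" using X1 SX2 by auto
                have fix1: "g ` X1 = X1" if "g \<in> G" for g
                  using GC that X1C X2 nx by auto
                have all: "\<forall>u\<in>L. card (X1 \<inter> u) = i"
                proof
                  fix u assume "u \<in> L"
                  then obtain g where g: "g \<in> G" "g ` l = u" using trans by blast
                  have "card (X1 \<inter> u) = card (g ` X1 \<inter> g ` l)" using fix1[OF g(1)] g(2) by simp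
                  also have "\<dots> = i" using card_img_Int[OF Gb(1)[OF g(1)]] X1i by simp
                  finally show "card (X1 \<inter> u) = i" .
                qed
                have "card (X2 \<inter> l) = i"
                  by (rule two_class[OF ls lk pC X2(1) X2(2) l _ _ assms(10) all])
                     (use cc X2 in auto)
                then have "X2 \<in> phi l" using X2 by (simp add: phi_def)
                then show False using X1 X2 by simp
              qed
            qed
          qed
        qed
      qed
      have allS: "card (F S) = card (F (phi l))" if SM: "S \<in> M" for S
      proof -
        obtain g where g: "g \<in> G" "(\<lambda>X. g ` X) ` phi l = S" using reach SM by blast
        have "(\<lambda>X. inv g ` X) ` S = phi l"
        proof -
          have "(\<lambda>X. inv g ` X) ` S = (\<lambda>X. inv g ` g ` X) ` phi l" using g(2) by auto
          also have "\<dots> = phi l" using Gb(1)[OF g(1)] by (simp add: bij_is_inj image_inv_f_f)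
          finally show ?thesis .
        qed
        then have "card (F S) \<le> card (F (phi l))" using le[OF Gb(2)[OF g(1)], of S] by simp
        then show ?thesis using le[OF g] by simp
      qed
      have LU: "L = (\<Union>S\<in>M. F S)" using phiM by (auto simp: F_def)
      have finM: "finite M" unfolding M_def using finC by simp
      have "card L = (\<Sum>S\<in>M. card (F S))"
        apply (subst LU) apply (rule card_UN_disjoint[OF finM])
        using finL by (auto simp: F_def)
      also have "\<dots> = card M * card (F (phi l))" using allS by simp
      finally show ?thesis using b dm cM by simp
    qed
  qed
qed

end
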